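(* In the qubit setting of the context: (i) problem (AD) has an optimal solution $R$ with $[R,W(\beta,\gamma,l)]=0$ for all $\beta,\gamma\in\mathbb{R}$, $l\in\{0,1\}$, and problem (PP) has an optimal solution $R_s$ with $[R_s,W(\beta,\gamma,l)]=0$ for all $\beta,\gamma,l$. (ii) If $R_s$ is feasible for (PP) with constants $\lambda_0,\lambda_1$ in the perfect retrieval condition, and $[R_s,W(\beta,\gamma,l)]=0$ for all $\beta,\gamma,l$, then $\lambda_0=\lambda_1$.
   Context: Fix an integer $n\ge1$ and real $\alpha$ with $0<\alpha<\pi/(4n)$. On $\mathbb{C}^2$ with computational basis $\{|0\rangle,|1\rangle\}$ let $|\pm\rangle=(|0\rangle\pm|1\rangle)/\sqrt2$, $\sigma_x,\sigma_z$ the Pauli matrices, $U_0=e^{i\alpha}|0\rangle\langle0|+e^{-i\alpha}|1\rangle\langle1|$, $U_1=e^{-i\alpha}|0\rangle\langle0|+e^{i\alpha}|1\rangle\langle1|$, $|\psi_{n,i}\rangle=U_i^n|+\rangle$ and $|\psi^*_{n,i}\rangle=(U_i^* )^n|+\rangle$ (complex conjugation in the computational basis). For $A=\sum_{ij}A_{ij}|i\rangle\langle j|$ set $|A\rangle\!\rangle:=\sum_{ij}A_{ij}|j\rangle|i\rangle$. Systems $\mathcal H_0$ (memory), $\mathcal H_1$ (input), $\mathcal H_2$ (output) are copies of $\mathbb{C}^2$. The Choi operator of a linear map $\mathcal R:L(\mathcal H_0\otimes\mathcal H_1)\to L(\mathcal H_2)$ is $R=(\mathcal I\otimes\mathcal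 R)(|I\rangle\!\rangle\langle\!\langle I|)\in L(\mathcal H_0\otimes\mathcal H_1\otimes\mathcal H_2)$. Let $D=\frac18\sum_{i=0,1}|\psi^*_{n,i}\rangle\langle\psi^*_{n,i}|\otimes|U_i\rangle\!\rangle\langle\!\langle U_i|$. Problem (AD): maximize $\mathrm{Tr}[RD]$ over $R\ge0$ with $\mathrm{Tr}_2R=I$. Problem (PP): maximize $\mathrm{Tr}[R_sD]$ over $R_s\ge0$ with $\mathrm{Tr}_2R_s\le I$ satisfying the perfect retrieval condition: there are $\lambda_0,\lambda_1\ge0$ with $\langle\psi^*_{n,i}|R_s|\psi^*_{n,i}\rangle=\lambda_i|U_i\rangle\!\rangle\langle\!\langle U_i|$ for $i=0,1$ (partial inner product on $\mathcal H_0$). Define $Z(\beta,\gamma)=e^{i\beta}|0\rangle\langle0|+e^{i\gamma}|1\rangle\langle1|$, $\sigma^{(0)}=I$, $\sigma^{(1)}=\sigma_x$, and $W(\beta,\gamma,l)=\sigma^{(l)}\otimes\sigma^{(l)}Z(\beta,\gamma)\otimes\sigma^{(l)}Z(\beta,\gamma)^*$ acting on $\mathcal H_0\otimes\mathcal H_1\otimes\mathcal H_2$. *)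

theory Defs
  imports Complex_Main
begin

text \<open>Qubit: computational basis indexed by bool (False = |0>, True = |1>).
  Operators are represented by their matrices in the computational basis,
  as functions row-index => column-index => complex.
  The three-qubit space H0 (x) H1 (x) H2 is indexed by triples (a0, a1, a2);
  H1 (x) H2 by pairs (a1, a2).\<close>

type_synonym 'i op = "'i \<Rightarrow> 'i \<Rightarrow> complex"
type_synonym 'i vec = "'i \<Rightarrow> complex"
type_synonym qb = bool
type_synonym idx2 = "bool \<times> bool"
type_synonym idx3 = "bool \<times> bool \<times> bool"

definition bit :: "bool \<Rightarrow> nat" where "bit b = (if b then 1 else 0)"

definition idop :: "('i::finite) op" where "idop x y = (if x = y then 1 else 0)"

definition opmult :: "('i::finite) op \<Rightarrow> 'i op \<Rightarrow> 'i op" where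
  "opmult A B x y = (\<Sum>z\<in>UNIV. A x z * B z y)"

definition trace :: "('i::finite) op \<Rightarrow> complex" where
  "trace A = (\<Sum>x\<in>UNIV. A x x)"

definition commutes :: "('i::finite) op \<Rightarrow> 'i op \<Rightarrow> bool" where
  "commutes A B \<longleftrightarrow> opmult A B = opmult B A"

definition psd :: "('i::finite) op \<Rightarrow> bool" where
  "psd A \<longleftrightarrow> (\<forall>v::'i vec. let q = (\<Sum>x\<in>UNIV. \<Sum>y\<in>UNIV. cnj (v x) * A x y * v y)
                      in q \<in> \<real> \<and> Re q \<ge> 0)"

definition ketbra :: "('i::finite) vec \<Rightarrow> 'i vec \<Rightarrow> 'i op" where
  "ketbra u v x y = u x * cnj (v y)"

definition conjop :: "qb op \<Rightarrow> qb op" where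
  "conjop A x y = cnj (A x y)"

definition tensor3 :: "qb op \<Rightarrow> qb op \<Rightarrow> qb op \<Rightarrow> idx3 op" where
  "tensor3 A B C = (\<lambda>(a0,a1,a2) (b0,b1,b2). A a0 b0 * B a1 b1 * C a2 b2)"

definition tensor12 :: "qb op \<Rightarrow> idx2 op \<Rightarrow> idx3 op" where
  "tensor12 A B = (\<lambda>(a0,a1,a2) (b0,b1,b2). A a0 b0 * B (a1,a2) (b1,b2))"

text \<open>Double ket: |A>> = sum_ij A_ij |j>|i>, a vector on H1 (x) H2.\<close>
definition dket :: "qb op \<Rightarrow> idx2 vec" where
  "dket A = (\<lambda>(j,i). A i j)"

definition plus_state :: "qb vec" where "plus_state x = 1 / complex_of_real (sqrt 2)"

definition sigma_x :: "qb op" where "sigma_x x y = (if x \<noteq> y then 1 else 0)"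
definition sigma_z :: "qb op" where "sigma_z x y = (if x = y then (if x then -1 else 1) else 0)"

text \<open>U_0 = diag(e^{i alpha}, e^{-i alpha}),  U_1 = diag(e^{-i alpha}, e^{i alpha}).\<close>
definition Uop :: "real \<Rightarrow> nat \<Rightarrow> qb op" where
  "Uop \<alpha> i x y = (if x = y then
       (if (i = 0) = (\<not> x) then cis \<alpha> else cis (- \<alpha>)) else 0)"

definition opapply :: "('i::finite) op \<Rightarrow> 'i vec \<Rightarrow> 'i vec" where
  "opapply A v x = (\<Sum>y\<in>UNIV. A x y * v y)"

definition oppow :: "('i::finite) op \<Rightarrow> nat \<Rightarrow> 'i op" where
  "oppow A k = (opmult A ^^ k) idop"

definition psi :: "real \<Rightarrow> nat \<Rightarrow> nat \<Rightarrow> qb vec" where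
  "psi \<alpha> n i = opapply (oppow (Uop \<alpha> i) n) plus_state"

definition psi_conj :: "real \<Rightarrow> nat \<Rightarrow> nat \<Rightarrow> qb vec" where
  "psi_conj \<alpha> n i = opapply (oppow (conjop (Uop \<alpha> i)) n) plus_state"

definition Dop :: "real \<Rightarrow> nat \<Rightarrow> idx3 op" where
  "Dop \<alpha> n x y = (1/8) * (\<Sum>i\<in>{0,1::nat}.
      tensor12 (ketbra (psi_conj \<alpha> n i) (psi_conj \<alpha> n i))
               (ketbra (dket (Uop \<alpha> i)) (dket (Uop \<alpha> i))) x y)"

definition ptrace2 :: "idx3 op \<Rightarrow> idx2 op" where
  "ptrace2 R = (\<lambda>(a0,a1) (b0,b1). \<Sum>c\<in>UNIV. R (a0,a1,c) (b0,b1,c))"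

definition pinner0 :: "qb vec \<Rightarrow> idx3 op \<Rightarrow> idx2 op" where
  "pinner0 \<phi> R = (\<lambda>(a1,a2) (b1,b2).
      \<Sum>a0\<in>UNIV. \<Sum>b0\<in>UNIV. cnj (\<phi> a0) * R (a0,a1,a2) (b0,b1,b2) * \<phi> b0)"

definition op_diff :: "('i::finite) op \<Rightarrow> 'i op \<Rightarrow> 'i op" where
  "op_diff A B x y = A x y - B x y"

definition op_scale :: "complex \<Rightarrow> ('i::finite) op \<Rightarrow> 'i op" where
  "op_scale c A x y = c * A x y"

definition AD_feasible :: "idx3 op \<Rightarrow> bool" where
  "AD_feasible R \<longleftrightarrow> psd R \<and> ptrace2 R = idop"

definition PP_feasible_with :: "real \<Rightarrow> nat \<Rightarrow> idx3 op \<Rightarrow> real \<Rightarrow> real \<Rightarrow> bool" where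
  "PP_feasible_with \<alpha> n R lam0 lam1 \<longleftrightarrow> psd R \<and> psd (op_diff idop (ptrace2 R)) \<and>
     lam0 \<ge> 0 \<and> lam1 \<ge> 0 \<and>
     pinner0 (psi_conj \<alpha> n 0) R = op_scale (complex_of_real lam0) (ketbra (dket (Uop \<alpha> 0)) (dket (Uop \<alpha> 0))) \<and>
     pinner0 (psi_conj \<alpha> n 1) R = op_scale (complex_of_real lam1) (ketbra (dket (Uop \<alpha> 1)) (dket (Uop \<alpha> 1)))"

definition PP_feasible :: "real \<Rightarrow> nat \<Rightarrow> idx3 op \<Rightarrow> bool" where
  "PP_feasible \<alpha> n R \<longleftrightarrow> (\<exists>lam0 lam1. PP_feasible_with \<alpha> n R lam0 lam1)"

text \<open>Objective Tr[R D] (real for Hermitian R, D; we maximise its real part).\<close>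
definition objective :: "real \<Rightarrow> nat \<Rightarrow> idx3 op \<Rightarrow> real" where
  "objective \<alpha> n R = Re (trace (opmult R (Dop \<alpha> n)))"

definition AD_optimal :: "real \<Rightarrow> nat \<Rightarrow> idx3 op \<Rightarrow> bool" where
  "AD_optimal \<alpha> n R \<longleftrightarrow> AD_feasible R \<and>
     (\<forall>R'. AD_feasible R' \<longrightarrow> objective \<alpha> n R' \<le> objective \<alpha> n R)"

definition PP_optimal :: "real \<Rightarrow> nat \<Rightarrow> idx3 op \<Rightarrow> bool" where
  "PP_optimal \<alpha> n R \<longleftrightarrow> PP_feasible \<alpha> n R \<and>
     (\<forall>R'. PP_feasible \<alpha> n R' \<longrightarrow> objective \<alpha> n R' \<le> objective \<alpha> n R)"

definition Zop :: "real \<Rightarrow> real \<Rightarrow> qb op" where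
  "Zop \<beta> \<gamma> x y = (if x = y then (if x then cis \<gamma> else cis \<beta>) else 0)"

definition sigma_l :: "nat \<Rightarrow> qb op" where
  "sigma_l l = (if l = 0 then idop else sigma_x)"

definition Wop :: "real \<Rightarrow> real \<Rightarrow> nat \<Rightarrow> idx3 op" where
  "Wop \<beta> \<gamma> l = tensor3 (sigma_l l) (opmult (sigma_l l) (Zop \<beta> \<gamma>))
                         (opmult (sigma_l l) (conjop (Zop \<beta> \<gamma>)))"

definition W_invariant :: "idx3 op \<Rightarrow> bool" where
  "W_invariant R \<longleftrightarrow> (\<forall>\<beta> \<gamma>. \<forall>l\<in>{0,1::nat}. commutes R (Wop \<beta> \<gamma> l))"

end

theory Submission
  imports Defs "HOL-Analysis.Analysis"
begin


lemma sum_bool_UNIV: "(\<Sum>x\<in>(UNIV::bool set). f x) = f True + f False"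
  by (simp add: UNIV_bool add.commute)

lemma sum_prod_UNIV: "(\<Sum>x\<in>(UNIV::('a::finite \<times> 'b::finite) set). f x) = (\<Sum>a\<in>UNIV. \<Sum>b\<in>UNIV. f (a,b))"
  using sum.cartesian_product[of "\<lambda>a b. f (a,b)" UNIV UNIV] by simp

definition diagop :: "('i::finite) Defs.vec \<Rightarrow> 'i op" where
  "diagop d x y = (if x = y then d x else 0)"

lemma opmult_diag: "opmult (diagop d) (diagop e) = diagop (\<lambda>x. d x * e x)"
proof (rule ext, rule ext)
  fix x y
  have "opmult (diagop d) (diagop e) x y = (\<Sum>z\<in>UNIV. if z = x then (if x = y then d x * e x else 0) else 0)"
    unfolding opmult_def diagop_def by (rule sum.cong) auto
  then show "opmult (diagop d) (diagop e) x y = diagop (\<lambda>x. d x * e x) x y"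
    by (simp add: diagop_def)
qed

lemma idop_diag: "idop = diagop (\<lambda>_. 1)"
  by (rule ext, rule ext) (simp add: idop_def diagop_def)

lemma oppow_diag: "oppow (diagop d) k = diagop (\<lambda>x. d x ^ k)"
  by (induction k) (simp_all add: oppow_def idop_diag opmult_diag mult.commute)

lemma opapply_diag: "opapply (diagop d) v x = d x * v x"
proof -
  have "opapply (diagop d) v x = (\<Sum>z\<in>UNIV. if z = x then d x * v x else 0)"
    unfolding opapply_def diagop_def by (rule sum.cong) auto
  then show ?thesis by simp
qed

lemma conjU_diag: "conjop (Uop \<alpha> i) = diagop (\<lambda>x. cnj (if (i = 0) = (\<not> x) then cis \<alpha> else cis (- \<alpha>)))"
  by (rule ext, rule ext) (simp add: conjop_def Uop_def diagop_def)

lemma psi1: "psi_conj \<alpha> n (Suc 0) x = psi_conj \<alpha> n 0 (\<not> x)"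
  by (simp add: psi_conj_def conjU_diag oppow_diag opapply_diag plus_state_def)

lemma U1: "Uop \<alpha> (Suc 0) x y = Uop \<alpha> 0 (\<not> x) (\<not> y)"
  by (simp add: Uop_def)

lemma cis_cnj1[simp]: "cis a * cnj (cis a) = 1"
  by (simp add: cis_cnj cis_mult)

definition fl :: "idx3 \<Rightarrow> idx3" where "fl = (\<lambda>(a,b,c). (\<not>a,\<not>b,\<not>c))"

lemma fl_fl[simp]: "fl (fl x) = x" by (cases x) (simp add: fl_def)

lemma fl_eq: "(x = fl z) = (z = fl x)" by auto

lemma Wop_flip: "Wop 0 0 (Suc 0) z y = (if z = fl y then 1 else 0)"
  by (cases z; cases y) (auto simp: Wop_def tensor3_def sigma_l_def opmult_def sigma_x_def Zop_def conjop_def sum_bool_UNIV fl_def)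

lemma opmult_Wflip: "opmult R (Wop 0 0 (Suc 0)) x y = R x (fl y)"
proof -
  have "opmult R (Wop 0 0 (Suc 0)) x y = (\<Sum>z\<in>UNIV. if z = fl y then R x (fl y) else 0)"
    unfolding opmult_def Wop_flip by (rule sum.cong) auto
  then show ?thesis by simp
qed

lemma opmult_Wflip2: "opmult (Wop 0 0 (Suc 0)) R x y = R (fl x) y"
proof -
  have "opmult (Wop 0 0 (Suc 0)) R x y = (\<Sum>z\<in>UNIV. if z = fl x then R (fl x) y else 0)"
    unfolding opmult_def Wop_flip by (rule sum.cong) (auto simp: fl_eq)
  then show ?thesis by simp
qed

lemma Winv_flip: assumes "W_invariant R" shows "R (fl x) (fl y) = R x y"
proof -
  have "commutes R (Wop 0 0 (Suc 0))" using assms by (simp add: W_invariant_def)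
  then have "opmult R (Wop 0 0 (Suc 0)) x (fl y) = opmult (Wop 0 0 (Suc 0)) R x (fl y)" by (simp add: commutes_def)
  then show ?thesis by (simp add: opmult_Wflip opmult_Wflip2)
qed


lemma part2:
  assumes "PP_feasible_with \<alpha> n Rs lam0 lam1" "W_invariant Rs"
  shows "lam0 = lam1"
proof -
  have e0: "pinner0 (psi_conj \<alpha> n 0) Rs (True,True) (True,True) = complex_of_real lam0"
    using assms(1) unfolding PP_feasible_with_def
    by (simp add: op_scale_def ketbra_def dket_def Uop_def)
  have e1: "pinner0 (psi_conj \<alpha> n (Suc 0)) Rs (False,False) (False,False) = complex_of_real lam1"
    using assms(1) unfolding PP_feasible_with_def
    by (simp add: op_scale_def ketbra_def dket_def Uop_def)
  have f: "Rs (a,False,False) (b,False,False) = Rs (\<not>a,True,True) (\<not>b,True,True)" for a b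
    using Winv_flip[OF assms(2), of "(a,False,False)" "(b,False,False)"] by (simp add: fl_def)
  have "pinner0 (psi_conj \<alpha> n (Suc 0)) Rs (False,False) (False,False) = pinner0 (psi_conj \<alpha> n 0) Rs (True,True) (True,True)"
    by (simp add: pinner0_def sum_bool_UNIV psi1 f add_ac)
  with e0 e1 show ?thesis by simp
qed



definition qf :: "('i::finite) Defs.vec \<Rightarrow> 'i op \<Rightarrow> complex" where
  "qf v A = (\<Sum>x\<in>UNIV. \<Sum>y\<in>UNIV. cnj (v x) * A x y * v y)"

lemma psd_qf: "psd A \<longleftrightarrow> (\<forall>v. qf v A \<in> \<real> \<and> 0 \<le> Re (qf v A))"
  by (simp add: psd_def qf_def Let_def)

lemma qf_add: "qf v (\<lambda>x y. A x y + B x y) = qf v A + qf v B"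
  by (simp add: qf_def distrib_left distrib_right sum.distrib)

lemma qf_scale: "qf v (\<lambda>x y. c * A x y) = c * qf v A"
  by (simp add: qf_def sum_distrib_left mult_ac)

lemma psd_add: "psd A \<Longrightarrow> psd B \<Longrightarrow> psd (\<lambda>x y. A x y + B x y)"
  by (simp add: psd_qf qf_add)

lemma psd_scale: "0 \<le> c \<Longrightarrow> psd A \<Longrightarrow> psd (\<lambda>x y. complex_of_real c * A x y)"
  by (simp add: psd_qf qf_scale)

lemma psd_conj:
  fixes A :: "('i::finite) op" and p :: "'i \<Rightarrow> 'i"
  assumes "bij p" "psd A"
  shows "psd (\<lambda>x y. complex_of_real (m x) * A (p x) (p y) * complex_of_real (m y))"
  unfolding psd_qf
proof
  fix v :: "'i Defs.vec"
  define u where "u z = complex_of_real (m (inv p z)) * v (inv p z)" for z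
  have up: "u (p x) = complex_of_real (m x) * v x" for x
    using assms(1) by (simp add: u_def bij_is_inj)
  have ri: "(\<Sum>z\<in>UNIV. F z) = (\<Sum>x\<in>UNIV. F (p x))" for F :: "'i \<Rightarrow> complex"
    by (rule sum.reindex_bij_betw[OF assms(1), symmetric])
  have "qf u A = (\<Sum>x\<in>UNIV. \<Sum>y\<in>UNIV. cnj (u (p x)) * A (p x) (p y) * u (p y))"
    unfolding qf_def by (subst ri, subst ri, rule refl)
  also have "\<dots> = qf v (\<lambda>x y. complex_of_real (m x) * A (p x) (p y) * complex_of_real (m y))"
    unfolding qf_def up by (simp add: mult_ac)
  finally show "qf v (\<lambda>x y. complex_of_real (m x) * A (p x) (p y) * complex_of_real (m y)) \<in> \<real> \<and>
        0 \<le> Re (qf v (\<lambda>x y. complex_of_real (m x) * A (p x) (p y) * complex_of_real (m y)))"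
    using assms(2) unfolding psd_qf by metis
qed

lemma psd_ind: "psd A \<Longrightarrow> psd (\<lambda>x y. complex_of_real (m x) * A x y * complex_of_real (m y))"
  using psd_conj[of id A m] by simp

lemma bij_fl: "bij fl"
  by (rule o_bij[of fl]) (auto simp: fun_eq_iff)

definition fl2 :: "idx2 \<Rightarrow> idx2" where "fl2 = (\<lambda>(a,b). (\<not>a,\<not>b))"

lemma fl2_fl2[simp]: "fl2 (fl2 x) = x" by (cases x) (simp add: fl2_def)

lemma bij_fl2: "bij fl2"
  by (rule o_bij[of fl2]) (auto simp: fun_eq_iff)

definition dd :: "idx3 \<Rightarrow> int" where "dd = (\<lambda>(a,b,c). if b = c then 0 else if b then 1 else -1)"

lemma dd_cases: "dd x = 0 \<or> dd x = 1 \<or> dd x = -1"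
  by (auto simp: dd_def split: prod.splits)

lemma dd_fl: "dd (fl x) = - dd x"
  by (auto simp: dd_def fl_def split: prod.splits)

definition twirl :: "idx3 op \<Rightarrow> idx3 op" where
  "twirl R x y = (if dd x = dd y then (R x y + R (fl x) (fl y)) / 2 else 0)"

definition twirl2 :: "idx2 op \<Rightarrow> idx2 op" where
  "twirl2 Q a b = (if snd a = snd b then (Q a b + Q (fl2 a) (fl2 b)) / 2 else 0)"

definition ind :: "int \<Rightarrow> idx3 \<Rightarrow> real" where "ind k x = (if dd x = k then 1 else 0)"
definition ind2 :: "bool \<Rightarrow> idx2 \<Rightarrow> real" where "ind2 k x = (if snd x = k then 1 else 0)"

lemma psd_twirl:
  assumes "psd R" shows "psd (twirl R)"
proof -
  have s: "psd (\<lambda>x y. complex_of_real (ind k x) * R x y * complex_of_real (ind k y))" for k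
    by (rule psd_ind[OF assms])
  have s': "psd (\<lambda>x y. complex_of_real (ind k x) * R (fl x) (fl y) * complex_of_real (ind k y))" for k
    by (rule psd_conj[OF bij_fl assms])
  have "psd (\<lambda>x y. complex_of_real (ind (-1) x) * R x y * complex_of_real (ind (-1) y)
     + complex_of_real (ind 0 x) * R x y * complex_of_real (ind 0 y)
     + complex_of_real (ind 1 x) * R x y * complex_of_real (ind 1 y)
     + complex_of_real (ind (-1) x) * R (fl x) (fl y) * complex_of_real (ind (-1) y)
     + complex_of_real (ind 0 x) * R (fl x) (fl y) * complex_of_real (ind 0 y)
     + complex_of_real (ind 1 x) * R (fl x) (fl y) * complex_of_real (ind 1 y))"
    by (intro psd_add s s')
  then have "psd (\<lambda>x y. complex_of_real (1/2) * (complex_of_real (ind (-1) x) * R x y * complex_of_real (ind (-1) y)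
     + complex_of_real (ind 0 x) * R x y * complex_of_real (ind 0 y)
     + complex_of_real (ind 1 x) * R x y * complex_of_real (ind 1 y)
     + complex_of_real (ind (-1) x) * R (fl x) (fl y) * complex_of_real (ind (-1) y)
     + complex_of_real (ind 0 x) * R (fl x) (fl y) * complex_of_real (ind 0 y)
     + complex_of_real (ind 1 x) * R (fl x) (fl y) * complex_of_real (ind 1 y)))"
    by (rule psd_scale[rotated]) simp
  moreover have "twirl R = (\<lambda>x y. complex_of_real (1/2) * (complex_of_real (ind (-1) x) * R x y * complex_of_real (ind (-1) y)
     + complex_of_real (ind 0 x) * R x y * complex_of_real (ind 0 y)
     + complex_of_real (ind 1 x) * R x y * complex_of_real (ind 1 y)
     + complex_of_real (ind (-1) x) * R (fl x) (fl y) * complex_of_real (ind (-1) y)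
     + complex_of_real (ind 0 x) * R (fl x) (fl y) * complex_of_real (ind 0 y)
     + complex_of_real (ind 1 x) * R (fl x) (fl y) * complex_of_real (ind 1 y)))"
  proof (intro ext)
    fix x y
    show "twirl R x y = complex_of_real (1/2) * (complex_of_real (ind (-1) x) * R x y * complex_of_real (ind (-1) y)
     + complex_of_real (ind 0 x) * R x y * complex_of_real (ind 0 y)
     + complex_of_real (ind 1 x) * R x y * complex_of_real (ind 1 y)
     + complex_of_real (ind (-1) x) * R (fl x) (fl y) * complex_of_real (ind (-1) y)
     + complex_of_real (ind 0 x) * R (fl x) (fl y) * complex_of_real (ind 0 y)
     + complex_of_real (ind 1 x) * R (fl x) (fl y) * complex_of_real (ind 1 y))"
      using dd_cases[of x] dd_cases[of y]
      by (elim disjE) (simp_all add: twirl_def ind_def)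
  qed
  ultimately show ?thesis by simp
qed

lemma psd_twirl2:
  assumes "psd Q" shows "psd (twirl2 Q)"
proof -
  have s: "psd (\<lambda>x y. complex_of_real (ind2 k x) * Q x y * complex_of_real (ind2 k y))" for k
    by (rule psd_ind[OF assms])
  have s': "psd (\<lambda>x y. complex_of_real (ind2 k x) * Q (fl2 x) (fl2 y) * complex_of_real (ind2 k y))" for k
    by (rule psd_conj[OF bij_fl2 assms])
  have "psd (\<lambda>x y. complex_of_real (ind2 True x) * Q x y * complex_of_real (ind2 True y)
     + complex_of_real (ind2 False x) * Q x y * complex_of_real (ind2 False y)
     + complex_of_real (ind2 True x) * Q (fl2 x) (fl2 y) * complex_of_real (ind2 True y)
     + complex_of_real (ind2 False x) * Q (fl2 x) (fl2 y) * complex_of_real (ind2 False y))"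
    by (intro psd_add s s')
  then have "psd (\<lambda>x y. complex_of_real (1/2) * (complex_of_real (ind2 True x) * Q x y * complex_of_real (ind2 True y)
     + complex_of_real (ind2 False x) * Q x y * complex_of_real (ind2 False y)
     + complex_of_real (ind2 True x) * Q (fl2 x) (fl2 y) * complex_of_real (ind2 True y)
     + complex_of_real (ind2 False x) * Q (fl2 x) (fl2 y) * complex_of_real (ind2 False y)))"
    by (rule psd_scale[rotated]) simp
  moreover have "twirl2 Q = (\<lambda>x y. complex_of_real (1/2) * (complex_of_real (ind2 True x) * Q x y * complex_of_real (ind2 True y)
     + complex_of_real (ind2 False x) * Q x y * complex_of_real (ind2 False y)
     + complex_of_real (ind2 True x) * Q (fl2 x) (fl2 y) * complex_of_real (ind2 True y)
     + complex_of_real (ind2 False x) * Q (fl2 x) (fl2 y) * complex_of_real (ind2 False y)))"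
    by (intro ext) (auto simp: twirl2_def ind2_def)
  ultimately show ?thesis by simp
qed



lemma ptrace2_twirl: "ptrace2 (twirl R) = twirl2 (ptrace2 R)"
proof (intro ext)
  fix a b :: idx2
  obtain a0 a1 b0 b1 where ab: "a = (a0,a1)" "b = (b0,b1)" by (cases a, cases b)
  show "ptrace2 (twirl R) a b = twirl2 (ptrace2 R) a b"
    unfolding ab by (cases a1; cases b1) (simp_all add: ptrace2_def twirl_def twirl2_def dd_def fl_def fl2_def sum_bool_UNIV add_divide_distrib)
qed

lemma twirl2_idop: "twirl2 idop = idop"
proof (intro ext)
  fix a b :: idx2
  obtain a0 a1 b0 b1 where ab: "a = (a0,a1)" "b = (b0,b1)" by (cases a, cases b)
  show "twirl2 idop a b = idop a b"
    unfolding ab by (auto simp: twirl2_def idop_def fl2_def)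
qed

lemma op_diff_twirl2: "op_diff idop (twirl2 Q) = twirl2 (op_diff idop Q)"
proof (intro ext)
  fix a b :: idx2
  obtain a0 a1 b0 b1 where ab: "a = (a0,a1)" "b = (b0,b1)" by (cases a, cases b)
  show "op_diff idop (twirl2 Q) a b = twirl2 (op_diff idop Q) a b"
    unfolding ab by (auto simp: twirl2_def idop_def fl2_def op_diff_def field_simps)
qed

lemma pinner0_twirl:
  "pinner0 \<phi> (twirl R) (a1,a2) (b1,b2) = (if dd (False,a1,a2) = dd (False,b1,b2) then
     (pinner0 \<phi> R (a1,a2) (b1,b2) + pinner0 (\<lambda>z. \<phi> (\<not>z)) R (\<not>a1,\<not>a2) (\<not>b1,\<not>b2)) / 2 else 0)"
  by (cases a1; cases a2; cases b1; cases b2)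
     (simp_all add: pinner0_def twirl_def dd_def fl_def sum_bool_UNIV field_simps)

abbreviation MM :: "real \<Rightarrow> nat \<Rightarrow> idx2 op" where
  "MM \<alpha> i \<equiv> ketbra (dket (Uop \<alpha> i)) (dket (Uop \<alpha> i))"

lemma psi1f: "(\<lambda>z. psi_conj \<alpha> n 0 (\<not>z)) = psi_conj \<alpha> n (Suc 0)"
  by (rule ext) (simp add: psi1)

lemma psi0f: "(\<lambda>z. psi_conj \<alpha> n (Suc 0) (\<not>z)) = psi_conj \<alpha> n 0"
  by (rule ext) (simp add: psi1)

lemma pinner0_twirl_feas:
  assumes "pinner0 (psi_conj \<alpha> n 0) R = op_scale (complex_of_real l0) (MM \<alpha> 0)"
      and "pinner0 (psi_conj \<alpha> n (Suc 0)) R = op_scale (complex_of_real l1) (MM \<alpha> (Suc 0))"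
  shows "pinner0 (psi_conj \<alpha> n 0) (twirl R) = op_scale (complex_of_real ((l0 + l1)/2)) (MM \<alpha> 0)"
    and "pinner0 (psi_conj \<alpha> n (Suc 0)) (twirl R) = op_scale (complex_of_real ((l0 + l1)/2)) (MM \<alpha> (Suc 0))"
proof -
  show "pinner0 (psi_conj \<alpha> n 0) (twirl R) = op_scale (complex_of_real ((l0 + l1)/2)) (MM \<alpha> 0)"
  proof (intro ext)
    fix a b :: idx2
    obtain a1 a2 b1 b2 where ab: "a = (a1,a2)" "b = (b1,b2)" by (cases a, cases b)
    show "pinner0 (psi_conj \<alpha> n 0) (twirl R) a b = op_scale (complex_of_real ((l0 + l1)/2)) (MM \<alpha> 0) a b"
      unfolding ab pinner0_twirl psi1f assms
      by (cases a1; cases a2; cases b1; cases b2)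
         (simp_all add: op_scale_def ketbra_def dket_def Uop_def dd_def field_simps)
  qed
  show "pinner0 (psi_conj \<alpha> n (Suc 0)) (twirl R) = op_scale (complex_of_real ((l0 + l1)/2)) (MM \<alpha> (Suc 0))"
  proof (intro ext)
    fix a b :: idx2
    obtain a1 a2 b1 b2 where ab: "a = (a1,a2)" "b = (b1,b2)" by (cases a, cases b)
    show "pinner0 (psi_conj \<alpha> n (Suc 0)) (twirl R) a b = op_scale (complex_of_real ((l0 + l1)/2)) (MM \<alpha> (Suc 0)) a b"
      unfolding ab pinner0_twirl psi0f assms
      by (cases a1; cases a2; cases b1; cases b2)
         (simp_all add: op_scale_def ketbra_def dket_def Uop_def dd_def field_simps)
  qed
qed

lemma D_zero: "z1 \<noteq> z2 \<or> x1 \<noteq> x2 \<Longrightarrow> Dop \<alpha> n (z0,z1,z2) (x0,x1,x2) = 0"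
  by (auto simp: Dop_def tensor12_def ketbra_def dket_def Uop_def)

lemma D_dd: "dd z \<noteq> dd x \<Longrightarrow> Dop \<alpha> n z x = 0"
proof -
  assume a: "dd z \<noteq> dd x"
  obtain z0 z1 z2 x0 x1 x2 where zx: "z = (z0,z1,z2)" "x = (x0,x1,x2)" by (cases z, cases x) auto
  have "z1 \<noteq> z2 \<or> x1 \<noteq> x2" using a unfolding zx by (cases z1; cases z2; cases x1; cases x2; simp add: dd_def)
  then show ?thesis unfolding zx by (rule D_zero)
qed

lemma D_fl: "Dop \<alpha> n (fl z) (fl x) = Dop \<alpha> n z x"
proof -
  obtain z0 z1 z2 x0 x1 x2 where zx: "z = (z0,z1,z2)" "x = (x0,x1,x2)" by (cases z, cases x) auto
  show ?thesis unfolding zx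
    by (simp add: Dop_def tensor12_def ketbra_def dket_def fl_def psi1 U1 algebra_simps)
qed

lemma ri_fl: "(\<Sum>z\<in>UNIV. F z) = (\<Sum>x\<in>UNIV. F (fl x))" for F :: "idx3 \<Rightarrow> complex"
  by (rule sum.reindex_bij_betw[OF bij_fl, symmetric])

lemma trace_twirl: "Defs.trace (opmult (twirl R) (Dop \<alpha> n)) = Defs.trace (opmult R (Dop \<alpha> n))"
proof -
  have pt: "twirl R x z * Dop \<alpha> n z x = (R x z * Dop \<alpha> n z x + R (fl x) (fl z) * Dop \<alpha> n z x) / 2" for x z
    by (cases "dd x = dd z") (auto simp: twirl_def D_dd field_simps)
  have "(\<Sum>x\<in>UNIV. \<Sum>z\<in>UNIV. R (fl x) (fl z) * Dop \<alpha> n z x)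
      = (\<Sum>x\<in>UNIV. \<Sum>z\<in>UNIV. R (fl (fl x)) (fl (fl z)) * Dop \<alpha> n (fl z) (fl x))"
    by (subst ri_fl, subst ri_fl, rule refl)
  also have "\<dots> = (\<Sum>x\<in>UNIV. \<Sum>z\<in>UNIV. R x z * Dop \<alpha> n z x)"
    by (simp add: D_fl)
  finally have e: "(\<Sum>x\<in>UNIV. \<Sum>z\<in>UNIV. R (fl x) (fl z) * Dop \<alpha> n z x) = (\<Sum>x\<in>UNIV. \<Sum>z\<in>UNIV. R x z * Dop \<alpha> n z x)" .
  have "Defs.trace (opmult (twirl R) (Dop \<alpha> n)) = (\<Sum>x\<in>UNIV. \<Sum>z\<in>UNIV. (R x z * Dop \<alpha> n z x + R (fl x) (fl z) * Dop \<alpha> n z x) / 2)"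
    by (simp add: Defs.trace_def opmult_def pt)
  also have "\<dots> = ((\<Sum>x\<in>UNIV. \<Sum>z\<in>UNIV. R x z * Dop \<alpha> n z x) + (\<Sum>x\<in>UNIV. \<Sum>z\<in>UNIV. R (fl x) (fl z) * Dop \<alpha> n z x)) / 2"
    by (simp only: sum.distrib[symmetric] sum_divide_distrib)
  also have "\<dots> = Defs.trace (opmult R (Dop \<alpha> n))"
    by (simp add: e Defs.trace_def opmult_def)
  finally show ?thesis .
qed

lemma objective_twirl: "objective \<alpha> n (twirl R) = objective \<alpha> n R"
  by (simp add: objective_def trace_twirl)



definition ph :: "real \<Rightarrow> real \<Rightarrow> bool \<Rightarrow> complex" where
  "ph \<beta> \<gamma> b = (if b then cis \<gamma> else cis \<beta>)"

definition wph :: "real \<Rightarrow> real \<Rightarrow> idx3 \<Rightarrow> complex" where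
  "wph \<beta> \<gamma> = (\<lambda>(a0,a1,a2). ph \<beta> \<gamma> a1 * cnj (ph \<beta> \<gamma> a2))"

lemma W0: "Wop \<beta> \<gamma> 0 z y = (if z = y then wph \<beta> \<gamma> y else 0)"
proof -
  obtain z0 z1 z2 y0 y1 y2 where zy: "z = (z0,z1,z2)" "y = (y0,y1,y2)" by (cases z, cases y) auto
  show ?thesis unfolding zy
    by (cases z0; cases z1; cases z2; cases y0; cases y1; cases y2)
       (simp_all add: Wop_def tensor3_def sigma_l_def opmult_def idop_def Zop_def conjop_def sum_bool_UNIV wph_def ph_def)
qed

lemma W1: "Wop \<beta> \<gamma> (Suc 0) z y = (if z = fl y then wph \<beta> \<gamma> y else 0)"
proof -
  obtain z0 z1 z2 y0 y1 y2 where zy: "z = (z0,z1,z2)" "y = (y0,y1,y2)" by (cases z, cases y) auto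
  show ?thesis unfolding zy
    by (cases z0; cases z1; cases z2; cases y0; cases y1; cases y2)
       (simp_all add: Wop_def tensor3_def sigma_l_def opmult_def sigma_x_def Zop_def conjop_def sum_bool_UNIV wph_def ph_def fl_def)
qed

lemma cis_cnj2[simp]: "cnj (cis a) * cis a = 1"
  by (simp add: cis_cnj cis_mult)

lemma w_dd: "dd x = dd y \<Longrightarrow> wph \<beta> \<gamma> x = wph \<beta> \<gamma> y"
proof -
  assume a: "dd x = dd y"
  obtain x0 x1 x2 y0 y1 y2 where xy: "x = (x0,x1,x2)" "y = (y0,y1,y2)" by (cases x, cases y) auto
  show ?thesis using a unfolding xy
    by (cases x1; cases x2; cases y1; cases y2) (simp_all add: dd_def wph_def ph_def)
qed

lemma twirl_fl: "twirl R (fl x) (fl y) = twirl R x y"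
  by (simp add: twirl_def dd_fl add.commute)

lemma opmult_W0a: "opmult R (Wop \<beta> \<gamma> 0) x y = R x y * wph \<beta> \<gamma> y"
proof -
  have "opmult R (Wop \<beta> \<gamma> 0) x y = (\<Sum>z\<in>UNIV. if z = y then R x y * wph \<beta> \<gamma> y else 0)"
    unfolding opmult_def W0 by (rule sum.cong) auto
  then show ?thesis by simp
qed

lemma opmult_W0b: "opmult (Wop \<beta> \<gamma> 0) R x y = wph \<beta> \<gamma> x * R x y"
proof -
  have "opmult (Wop \<beta> \<gamma> 0) R x y = (\<Sum>z\<in>UNIV. if z = x then wph \<beta> \<gamma> x * R x y else 0)"
    unfolding opmult_def W0 by (rule sum.cong) auto
  then show ?thesis by simp
qed

lemma opmult_W1a: "opmult R (Wop \<beta> \<gamma> (Suc 0)) x y = R x (fl y) * wph \<beta> \<gamma> y"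
proof -
  have "opmult R (Wop \<beta> \<gamma> (Suc 0)) x y = (\<Sum>z\<in>UNIV. if z = fl y then R x (fl y) * wph \<beta> \<gamma> y else 0)"
    unfolding opmult_def W1 by (rule sum.cong) auto
  then show ?thesis by simp
qed

lemma opmult_W1b: "opmult (Wop \<beta> \<gamma> (Suc 0)) R x y = wph \<beta> \<gamma> (fl x) * R (fl x) y"
proof -
  have "opmult (Wop \<beta> \<gamma> (Suc 0)) R x y = (\<Sum>z\<in>UNIV. if z = fl x then wph \<beta> \<gamma> (fl x) * R (fl x) y else 0)"
    unfolding opmult_def W1 by (rule sum.cong) (auto simp: fl_eq)
  then show ?thesis by simp
qed

lemma W_inv_twirl: "W_invariant (twirl R)"
  unfolding W_invariant_def
proof (intro allI ballI)
  fix \<beta> \<gamma> :: real and l :: nat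
  assume "l \<in> {0,1}"
  then have l: "l = 0 \<or> l = Suc 0" by auto
  have c0: "commutes (twirl R) (Wop \<beta> \<gamma> 0)"
    unfolding commutes_def
  proof (intro ext)
    fix x y
    show "opmult (twirl R) (Wop \<beta> \<gamma> 0) x y = opmult (Wop \<beta> \<gamma> 0) (twirl R) x y"
      unfolding opmult_W0a opmult_W0b
    proof (cases "dd x = dd y")
      case True
      then show "twirl R x y * wph \<beta> \<gamma> y = wph \<beta> \<gamma> x * twirl R x y"
        using w_dd[OF True, of \<beta> \<gamma>] by (simp add: mult.commute)
    next
      case False
      then show "twirl R x y * wph \<beta> \<gamma> y = wph \<beta> \<gamma> x * twirl R x y"
        by (simp add: twirl_def)
    qed
  qed
  have c1: "commutes (twirl R) (Wop \<beta> \<gamma> (Suc 0))"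
    unfolding commutes_def
  proof (intro ext)
    fix x y
    have e: "twirl R (fl x) y = twirl R x (fl y)"
      using twirl_fl[of R x "fl y"] by simp
    show "opmult (twirl R) (Wop \<beta> \<gamma> (Suc 0)) x y = opmult (Wop \<beta> \<gamma> (Suc 0)) (twirl R) x y"
      unfolding opmult_W1a opmult_W1b e
    proof (cases "dd x = dd (fl y)")
      case True
      then have dfl: "dd (fl x) = dd y" by (simp add: dd_fl)
      show "twirl R x (fl y) * wph \<beta> \<gamma> y = wph \<beta> \<gamma> (fl x) * twirl R x (fl y)"
        using w_dd[OF dfl, of \<beta> \<gamma>] by (simp add: mult.commute)
    next
      case False
      then show "twirl R x (fl y) * wph \<beta> \<gamma> y = wph \<beta> \<gamma> (fl x) * twirl R x (fl y)"
        by (simp add: twirl_def)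
    qed
  qed
  show "commutes (twirl R) (Wop \<beta> \<gamma> l)" using l c0 c1 by auto
qed



lemma qf_one: "qf (\<lambda>z. if z = x then a else 0) A = cnj a * A x x * a"
proof -
  let ?v = "\<lambda>z. if z = x then a else 0"
  have inner: "(\<Sum>w\<in>UNIV. cnj (?v z) * A z w * ?v w) = cnj (?v z) * A z x * a" for z
  proof -
    have "(\<Sum>w\<in>UNIV. cnj (?v z) * A z w * ?v w) = (\<Sum>w\<in>UNIV. if w = x then cnj (?v z) * A z x * a else 0)"
      by (rule sum.cong) auto
    then show ?thesis by simp
  qed
  have "qf ?v A = (\<Sum>z\<in>UNIV. cnj (?v z) * A z x * a)"
    unfolding qf_def inner ..
  also have "\<dots> = (\<Sum>z\<in>UNIV. if z = x then cnj a * A x x * a else 0)"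
    by (rule sum.cong) auto
  finally show ?thesis by simp
qed

lemma qf_two:
  assumes "x \<noteq> y"
  shows "qf (\<lambda>z. (if z = x then a else 0) + (if z = y then b else 0)) A
     = cnj a * A x x * a + cnj a * A x y * b + cnj b * A y x * a + cnj b * A y y * b"
proof -
  let ?v = "\<lambda>z. (if z = x then a else 0) + (if z = y then b else 0)"
  have inner: "(\<Sum>w\<in>UNIV. cnj (?v z) * A z w * ?v w) = cnj (?v z) * (A z x * a + A z y * b)" for z
  proof -
    have "(\<Sum>w\<in>UNIV. cnj (?v z) * A z w * ?v w) = (\<Sum>w\<in>UNIV. (if w = x then cnj (?v z) * A z x * a else 0) + (if w = y then cnj (?v z) * A z y * b else 0))"
      by (rule sum.cong) (auto simp: algebra_simps)
    also have "\<dots> = cnj (?v z) * A z x * a + cnj (?v z) * A z y * b"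
      by (simp add: sum.distrib)
    finally show ?thesis by (simp add: algebra_simps)
  qed
  have "qf ?v A = (\<Sum>z\<in>UNIV. cnj (?v z) * (A z x * a + A z y * b))"
    unfolding qf_def inner ..
  also have "\<dots> = (\<Sum>z\<in>UNIV. (if z = x then cnj a * (A x x * a + A x y * b) else 0) + (if z = y then cnj b * (A y x * a + A y y * b) else 0))"
    by (rule sum.cong) (auto simp: algebra_simps)
  also have "\<dots> = cnj a * (A x x * a + A x y * b) + cnj b * (A y x * a + A y y * b)"
    by (simp add: sum.distrib)
  finally show ?thesis by (simp add: algebra_simps)
qed

lemma psd_h: "psd A \<Longrightarrow> Im (qf v A) = 0 \<and> 0 \<le> Re (qf v A)"
  by (simp add: psd_qf complex_is_Real_iff)

lemma psd_diag: assumes "psd A" shows "Im (A x x) = 0" "0 \<le> Re (A x x)"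
  using psd_h[OF assms, of "\<lambda>z. if z = x then 1 else 0"] by (simp_all add: qf_one)

lemma psd_entry_bound:
  assumes "psd A" "\<And>x. Re (A x x) \<le> 1"
  shows "cmod (A x y) \<le> 2"
proof (cases "x = y")
  case True
  have "cmod (A x x) \<le> \<bar>Re (A x x)\<bar> + \<bar>Im (A x x)\<bar>" by (rule cmod_le)
  then show ?thesis using True psd_diag[OF assms(1), of x] assms(2)[of x] by simp
next
  case False
  have q: "Im (cnj a * A x x * a + cnj a * A x y * b + cnj b * A y x * a + cnj b * A y y * b) = 0 \<and>
     0 \<le> Re (cnj a * A x x * a + cnj a * A x y * b + cnj b * A y x * a + cnj b * A y y * b)" for a b
    using psd_h[OF assms(1), of "\<lambda>z. (if z = x then a else 0) + (if z = y then b else 0)"]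
    by (simp only: qf_two[OF False])
  have dx: "Im (A x x) = 0" "0 \<le> Re (A x x)" "Re (A x x) \<le> 1" using psd_diag[OF assms(1), of x] assms(2)[of x] by auto
  have dy: "Im (A y y) = 0" "0 \<le> Re (A y y)" "Re (A y y) \<le> 1" using psd_diag[OF assms(1), of y] assms(2)[of y] by auto
  have q1: "Im (A x x + A x y + A y x + A y y) = 0 \<and> 0 \<le> Re (A x x + A x y + A y x + A y y)"
    using q[of 1 1] by simp
  have q2: "Im (A x x - A x y - A y x + A y y) = 0 \<and> 0 \<le> Re (A x x - A x y - A y x + A y y)"
    using q[of 1 "-1"] by simp
  have q3: "Im (A x x + \<i> * A x y - \<i> * A y x + A y y) = 0 \<and> 0 \<le> Re (A x x + \<i> * A x y - \<i> * A y x + A y y)"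
    using q[of 1 "\<i>"] by (simp add: algebra_simps)
  have q4: "Im (A x x - \<i> * A x y + \<i> * A y x + A y y) = 0 \<and> 0 \<le> Re (A x x - \<i> * A x y + \<i> * A y x + A y y)"
    using q[of 1 "-\<i>"] by (simp add: algebra_simps)
  have r: "\<bar>Re (A x y)\<bar> \<le> 1" "\<bar>Im (A x y)\<bar> \<le> 1"
    using q1 q2 q3 q4 dx dy by auto
  have "cmod (A x y) \<le> \<bar>Re (A x y)\<bar> + \<bar>Im (A x y)\<bar>" by (rule cmod_le)
  then show ?thesis using r by linarith
qed



lemma cont_entry [continuous_intros]:
  "continuous_on S (\<lambda>R::'a \<Rightarrow> 'b \<Rightarrow> 'c::topological_space. R x y)"
proof -
  have a: "continuous_on UNIV (\<lambda>R::'a \<Rightarrow> 'b \<Rightarrow> 'c. R x)" by (rule continuous_on_product_coordinates)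
  have b: "continuous_on UNIV (\<lambda>g::'b \<Rightarrow> 'c. g y)" by (rule continuous_on_product_coordinates)
  have "continuous_on UNIV (\<lambda>R::'a \<Rightarrow> 'b \<Rightarrow> 'c. R x y)"
    using continuous_on_compose2[OF b a] by simp
  then show ?thesis by (rule continuous_on_subset) simp
qed

lemma compact_box: "compact {R :: idx3 \<Rightarrow> idx3 \<Rightarrow> complex. \<forall>x y. R x y \<in> cball 0 2}"
proof -
  have c1: "compact (PiE UNIV (\<lambda>_::idx3. cball (0::complex) 2))"
    using compactin_PiE[of "\<lambda>_. euclidean" UNIV "\<lambda>_::idx3. cball (0::complex) 2"]
    by (simp add: euclidean_product_topology)
  have c2: "compact (PiE UNIV (\<lambda>_::idx3. PiE UNIV (\<lambda>_::idx3. cball (0::complex) 2)))"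
    using compactin_PiE[of "\<lambda>_. euclidean" UNIV "\<lambda>_::idx3. PiE UNIV (\<lambda>_::idx3. cball (0::complex) 2)"] c1
    by (simp add: euclidean_product_topology)
  have "{R :: idx3 \<Rightarrow> idx3 \<Rightarrow> complex. \<forall>x y. R x y \<in> cball 0 2} = PiE UNIV (\<lambda>_::idx3. PiE UNIV (\<lambda>_::idx3. cball (0::complex) 2))"
    by (auto simp: PiE_UNIV_domain Pi_iff)
  with c2 show ?thesis by simp
qed

lemma closed_psd:
  fixes f :: "'a::topological_space \<Rightarrow> ('i::finite) op"
  assumes "\<And>x y. continuous_on UNIV (\<lambda>R. f R x y)"
  shows "closed {R. psd (f R)}"
proof -
  have "{R. psd (f R)} = {R. \<forall>v. Im (qf v (f R)) = 0 \<and> 0 \<le> Re (qf v (f R))}"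
    by (simp add: psd_qf complex_is_Real_iff)
  also have "closed \<dots>"
    unfolding qf_def
    by (intro closed_Collect_all closed_Collect_conj closed_Collect_eq closed_Collect_le
          continuous_intros assms)
  finally show ?thesis .
qed

lemma ptrace2_eq: "ptrace2 R a b = (\<Sum>c\<in>UNIV. R (fst a, snd a, c) (fst b, snd b, c))"
  by (cases a, cases b) (simp add: ptrace2_def)

lemma pinner0_eq: "pinner0 \<phi> R a b = (\<Sum>a0\<in>UNIV. \<Sum>b0\<in>UNIV. cnj (\<phi> a0) * R (a0, fst a, snd a) (b0, fst b, snd b) * \<phi> b0)"
  by (cases a, cases b) (simp add: pinner0_def)

lemma objective_eq: "objective \<alpha> n R = Re (\<Sum>x\<in>UNIV. \<Sum>z\<in>UNIV. R x z * Dop \<alpha> n z x)"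
  by (simp add: objective_def Defs.trace_def opmult_def)

lemma cont_objective: "continuous_on S (objective \<alpha> n)"
  unfolding objective_eq[abs_def] by (intro continuous_intros)



lemma psd_idop: "psd (idop :: ('i::finite) op)"
  unfolding psd_qf
proof
  fix v :: "'i Defs.vec"
  have inner: "(\<Sum>y\<in>UNIV. cnj (v x) * idop x y * v y) = complex_of_real ((Re (v x))\<^sup>2 + (Im (v x))\<^sup>2)" for x
  proof -
    have "(\<Sum>y\<in>UNIV. cnj (v x) * idop x y * v y) = (\<Sum>y\<in>UNIV. if y = x then v x * cnj (v x) else 0)"
      by (rule sum.cong) (auto simp: idop_def)
    then show ?thesis by (simp add: complex_mult_cnj)
  qed
  have "qf v idop = complex_of_real (\<Sum>x\<in>UNIV. (Re (v x))\<^sup>2 + (Im (v x))\<^sup>2)"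
    unfolding qf_def inner by simp
  moreover have "0 \<le> (\<Sum>x\<in>UNIV. (Re (v x))\<^sup>2 + (Im (v x))\<^sup>2)" by (intro sum_nonneg) simp
  ultimately show "qf v idop \<in> \<real> \<and> 0 \<le> Re (qf v idop)" by simp
qed

lemma psd_zero: "psd (\<lambda>x y. 0 :: complex)"
  by (simp add: psd_qf qf_def)

lemma twirl_AD: "AD_feasible R \<Longrightarrow> AD_feasible (twirl R)"
  by (simp add: AD_feasible_def psd_twirl ptrace2_twirl twirl2_idop)

lemma twirl_PP:
  assumes "PP_feasible_with \<alpha> n R l0 l1"
  shows "PP_feasible_with \<alpha> n (twirl R) ((l0+l1)/2) ((l0+l1)/2)"
proof -
  have a: "psd R" "psd (op_diff idop (ptrace2 R))" "0 \<le> l0" "0 \<le> l1"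
    "pinner0 (psi_conj \<alpha> n 0) R = op_scale (complex_of_real l0) (MM \<alpha> 0)"
    "pinner0 (psi_conj \<alpha> n (Suc 0)) R = op_scale (complex_of_real l1) (MM \<alpha> (Suc 0))"
    using assms by (simp_all add: PP_feasible_with_def)
  have "psd (op_diff idop (ptrace2 (twirl R)))"
    unfolding ptrace2_twirl op_diff_twirl2 by (rule psd_twirl2[OF a(2)])
  then show ?thesis
    using a psd_twirl[OF a(1)] pinner0_twirl_feas[OF a(5) a(6)]
    by (simp add: PP_feasible_with_def)
qed

lemma diag_le:
  assumes "psd R" "\<And>a. Re (ptrace2 R a a) \<le> 1"
  shows "Re (R x x) \<le> 1"
proof -
  obtain x0 x1 x2 where x: "x = (x0,x1,x2)" by (cases x) auto
  have "Re (ptrace2 R (x0,x1) (x0,x1)) \<le> 1" by (rule assms(2))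
  then have "Re (R (x0,x1,True) (x0,x1,True)) + Re (R (x0,x1,False) (x0,x1,False)) \<le> 1"
    by (simp add: ptrace2_def sum_bool_UNIV)
  moreover have "0 \<le> Re (R (x0,x1,True) (x0,x1,True))" "0 \<le> Re (R (x0,x1,False) (x0,x1,False))"
    using psd_diag[OF assms(1)] by auto
  ultimately show ?thesis unfolding x by (cases x2) auto
qed

lemma bound_feas:
  assumes "psd R" "\<And>a. Re (ptrace2 R a a) \<le> 1"
  shows "R \<in> {R :: idx3 \<Rightarrow> idx3 \<Rightarrow> complex. \<forall>x y. R x y \<in> cball 0 2}"
  using psd_entry_bound[OF assms(1) diag_le[OF assms]] by simp

lemma AD_bound: "AD_feasible R \<Longrightarrow> Re (ptrace2 R a a) \<le> 1"
  by (simp add: AD_feasible_def idop_def)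

lemma PP_bound: "psd (op_diff idop (ptrace2 R)) \<Longrightarrow> Re (ptrace2 R a a) \<le> 1"
  using psd_diag(2)[of "op_diff idop (ptrace2 R)" a] by (simp add: op_diff_def idop_def)

lemma compact_AD: "compact {R. AD_feasible R}"
proof -
  have eq: "{R. AD_feasible R} = {R :: idx3 \<Rightarrow> idx3 \<Rightarrow> complex. \<forall>x y. R x y \<in> cball 0 2} \<inter>
      ({R. psd R} \<inter> {R. \<forall>a b. ptrace2 R a b = idop a b})"
  proof (intro set_eqI iffI)
    fix R assume "R \<in> {R. AD_feasible R}"
    then have f: "AD_feasible R" by simp
    then have p: "psd R" "ptrace2 R = idop" by (simp_all add: AD_feasible_def)
    have "R \<in> {R :: idx3 \<Rightarrow> idx3 \<Rightarrow> complex. \<forall>x y. R x y \<in> cball 0 2}"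
      using bound_feas[of R] AD_bound[OF f] p(1) by blast
    then show "R \<in> {R :: idx3 \<Rightarrow> idx3 \<Rightarrow> complex. \<forall>x y. R x y \<in> cball 0 2} \<inter>
      ({R. psd R} \<inter> {R. \<forall>a b. ptrace2 R a b = idop a b})" using p by simp
  next
    fix R assume "R \<in> {R :: idx3 \<Rightarrow> idx3 \<Rightarrow> complex. \<forall>x y. R x y \<in> cball 0 2} \<inter>
      ({R. psd R} \<inter> {R. \<forall>a b. ptrace2 R a b = idop a b})"
    then show "R \<in> {R. AD_feasible R}" by (simp add: AD_feasible_def fun_eq_iff)
  qed
  have c1: "closed {R :: idx3 op. psd R}"
    using closed_psd[of "\<lambda>R::idx3 op. R"] by (simp add: cont_entry)
  have c2: "closed {R :: idx3 op. \<forall>a b. ptrace2 R a b = idop a b}"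
    unfolding ptrace2_eq
    by (intro closed_Collect_all closed_Collect_eq continuous_intros)
  show ?thesis unfolding eq
    by (intro compact_Int_closed compact_box closed_Int c1 c2)
qed

lemma MM_ee: "MM \<alpha> i (False,False) (False,False) = 1"
  by (simp add: ketbra_def dket_def Uop_def)

lemma lam_iff:
  assumes "M (False,False) (False,False) = 1"
  shows "(\<exists>l. 0 \<le> l \<and> P = op_scale (complex_of_real l) M) \<longleftrightarrow>
    ((\<forall>a b. P a b = P (False,False) (False,False) * M a b) \<and> Im (P (False,False) (False,False)) = 0
       \<and> 0 \<le> Re (P (False,False) (False,False)))"
proof
  assume "\<exists>l. 0 \<le> l \<and> P = op_scale (complex_of_real l) M"
  then obtain l where l: "0 \<le> l" "P = op_scale (complex_of_real l) M" by blast
  then show "(\<forall>a b. P a b = P (False,False) (False,False) * M a b) \<and> Im (P (False,False) (False,False)) = 0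
       \<and> 0 \<le> Re (P (False,False) (False,False))"
    using assms by (simp add: op_scale_def)
next
  assume h: "(\<forall>a b. P a b = P (False,False) (False,False) * M a b) \<and> Im (P (False,False) (False,False)) = 0
       \<and> 0 \<le> Re (P (False,False) (False,False))"
  let ?l = "Re (P (False,False) (False,False))"
  have im: "Im (P (False,False) (False,False)) = 0" using h by blast
  have e: "P (False,False) (False,False) = complex_of_real ?l" using im by (simp add: complex_eq_iff)
  have "P = op_scale (complex_of_real ?l) M"
  proof (intro ext)
    fix a b
    have "P a b = P (False,False) (False,False) * M a b" using h by blast
    also have "\<dots> = complex_of_real ?l * M a b" using e by simp
    finally show "P a b = op_scale (complex_of_real ?l) M a b" by (simp add: op_scale_def)
  qed
  moreover have "0 \<le> ?l" using h by blast
  ultimately show "\<exists>l. 0 \<le> l \<and> P = op_scale (complex_of_real l) M" by blast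
qed

definition Cset :: "real \<Rightarrow> nat \<Rightarrow> nat \<Rightarrow> idx3 op set" where
  "Cset \<alpha> n i = {R. (\<forall>a b. pinner0 (psi_conj \<alpha> n i) R a b = pinner0 (psi_conj \<alpha> n i) R (False,False) (False,False) * MM \<alpha> i a b)
      \<and> Im (pinner0 (psi_conj \<alpha> n i) R (False,False) (False,False)) = 0
      \<and> 0 \<le> Re (pinner0 (psi_conj \<alpha> n i) R (False,False) (False,False))}"

lemma closed_Cset: "closed (Cset \<alpha> n i)"
  unfolding Cset_def pinner0_eq
  by (intro closed_Collect_all closed_Collect_conj closed_Collect_eq closed_Collect_le continuous_intros)

lemma PP_feasible_iff: "PP_feasible \<alpha> n R \<longleftrightarrow> psd R \<and> psd (op_diff idop (ptrace2 R)) \<and> R \<in> Cset \<alpha> n 0 \<and> R \<in> Cset \<alpha> n (Suc 0)"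
proof -
  have L0: "(\<exists>l. 0 \<le> l \<and> pinner0 (psi_conj \<alpha> n 0) R = op_scale (complex_of_real l) (MM \<alpha> 0)) \<longleftrightarrow> R \<in> Cset \<alpha> n 0"
    unfolding Cset_def mem_Collect_eq by (rule lam_iff[where M = "MM \<alpha> 0", OF MM_ee])
  have L1: "(\<exists>l. 0 \<le> l \<and> pinner0 (psi_conj \<alpha> n (Suc 0)) R = op_scale (complex_of_real l) (MM \<alpha> (Suc 0))) \<longleftrightarrow> R \<in> Cset \<alpha> n (Suc 0)"
    unfolding Cset_def mem_Collect_eq by (rule lam_iff[where M = "MM \<alpha> (Suc 0)", OF MM_ee])
  have "PP_feasible \<alpha> n R \<longleftrightarrow> psd R \<and> psd (op_diff idop (ptrace2 R)) \<and>
     (\<exists>l. 0 \<le> l \<and> pinner0 (psi_conj \<alpha> n 0) R = op_scale (complex_of_real l) (MM \<alpha> 0)) \<and>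
     (\<exists>l. 0 \<le> l \<and> pinner0 (psi_conj \<alpha> n (Suc 0)) R = op_scale (complex_of_real l) (MM \<alpha> (Suc 0)))"
    unfolding PP_feasible_def PP_feasible_with_def by auto
  then show ?thesis using L0 L1 by simp
qed

lemma compact_PP: "compact {R. PP_feasible \<alpha> n R}"
proof -
  have eq: "{R. PP_feasible \<alpha> n R} = {R :: idx3 \<Rightarrow> idx3 \<Rightarrow> complex. \<forall>x y. R x y \<in> cball 0 2} \<inter>
      ({R. psd R} \<inter> {R. psd (op_diff idop (ptrace2 R))} \<inter> Cset \<alpha> n 0 \<inter> Cset \<alpha> n (Suc 0))"
  proof (intro set_eqI iffI)
    fix R assume "R \<in> {R. PP_feasible \<alpha> n R}"
    then have p: "psd R" "psd (op_diff idop (ptrace2 R))" "R \<in> Cset \<alpha> n 0" "R \<in> Cset \<alpha> n (Suc 0)"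
      by (simp_all add: PP_feasible_iff)
    have "R \<in> {R :: idx3 \<Rightarrow> idx3 \<Rightarrow> complex. \<forall>x y. R x y \<in> cball 0 2}"
      using bound_feas[of R] PP_bound[OF p(2)] p(1) by blast
    then show "R \<in> {R :: idx3 \<Rightarrow> idx3 \<Rightarrow> complex. \<forall>x y. R x y \<in> cball 0 2} \<inter>
      ({R. psd R} \<inter> {R. psd (op_diff idop (ptrace2 R))} \<inter> Cset \<alpha> n 0 \<inter> Cset \<alpha> n (Suc 0))" using p by simp
  next
    fix R assume "R \<in> {R :: idx3 \<Rightarrow> idx3 \<Rightarrow> complex. \<forall>x y. R x y \<in> cball 0 2} \<inter>
      ({R. psd R} \<inter> {R. psd (op_diff idop (ptrace2 R))} \<inter> Cset \<alpha> n 0 \<inter> Cset \<alpha> n (Suc 0))"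
    then show "R \<in> {R. PP_feasible \<alpha> n R}" by (simp add: PP_feasible_iff)
  qed
  have c1: "closed {R :: idx3 op. psd R}"
    using closed_psd[of "\<lambda>R::idx3 op. R"] by (simp add: cont_entry)
  have c2: "closed {R :: idx3 op. psd (op_diff idop (ptrace2 R))}"
    by (rule closed_psd) (simp add: op_diff_def ptrace2_eq continuous_intros)
  show ?thesis unfolding eq
    by (intro compact_Int_closed compact_box closed_Int c1 c2 closed_Cset)
qed



lemma AD_nonempty: "AD_feasible (\<lambda>x y. complex_of_real (1/2) * idop x y)"
proof -
  have "psd (\<lambda>x y. complex_of_real (1/2) * (idop :: idx3 op) x y)" by (rule psd_scale) (simp_all add: psd_idop)
  moreover have "ptrace2 (\<lambda>x y. complex_of_real (1/2) * idop x y) = idop"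
  proof (intro ext)
    fix a b :: idx2
    show "ptrace2 (\<lambda>x y. complex_of_real (1/2) * idop x y) a b = idop a b"
      by (cases a, cases b) (auto simp: ptrace2_def idop_def sum_bool_UNIV)
  qed
  ultimately show ?thesis by (simp add: AD_feasible_def)
qed

lemma PP_nonempty: "PP_feasible_with \<alpha> n (\<lambda>x y. 0) 0 0"
proof -
  have "op_diff idop (ptrace2 (\<lambda>x y. 0)) = idop"
    by (intro ext) (simp add: op_diff_def ptrace2_def split: prod.splits)
  moreover have "pinner0 \<phi> (\<lambda>x y. 0) = op_scale 0 M" for \<phi> M
    by (intro ext) (simp add: pinner0_def op_scale_def split: prod.splits)
  ultimately show ?thesis by (simp add: PP_feasible_with_def psd_zero psd_idop)
qed

theorem lemma1:
  fixes n :: nat and \<alpha> :: real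
  assumes "n \<ge> 1" and "0 < \<alpha>" and "\<alpha> < pi / (4 * real n)"
  shows "((\<exists>R. AD_optimal \<alpha> n R \<and> W_invariant R) \<and>
          (\<exists>Rs. PP_optimal \<alpha> n Rs \<and> W_invariant Rs)) \<and>
         (\<forall>Rs lam0 lam1. PP_feasible_with \<alpha> n Rs lam0 lam1 \<and> W_invariant Rs \<longrightarrow> lam0 = lam1)"
proof (intro conjI allI impI)
  obtain R where R: "R \<in> {R. AD_feasible R}" "\<forall>y\<in>{R. AD_feasible R}. objective \<alpha> n y \<le> objective \<alpha> n R"
    using continuous_attains_sup[OF compact_AD _ cont_objective, of \<alpha> n] AD_nonempty by blast
  have "AD_optimal \<alpha> n (twirl R)"
    using R twirl_AD by (simp add: AD_optimal_def objective_twirl)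
  then show "\<exists>R. AD_optimal \<alpha> n R \<and> W_invariant R" using W_inv_twirl by blast
next
  obtain R where R: "R \<in> {R. PP_feasible \<alpha> n R}" "\<forall>y\<in>{R. PP_feasible \<alpha> n R}. objective \<alpha> n y \<le> objective \<alpha> n R"
    using continuous_attains_sup[OF compact_PP _ cont_objective, of \<alpha> n \<alpha> n] PP_nonempty[of \<alpha> n]
    unfolding PP_feasible_def by blast
  have "PP_feasible \<alpha> n (twirl R)"
    using R(1) twirl_PP unfolding PP_feasible_def by blast
  then have "PP_optimal \<alpha> n (twirl R)"
    using R(2) by (simp add: PP_optimal_def objective_twirl)
  then show "\<exists>Rs. PP_optimal \<alpha> n Rs \<and> W_invariant Rs" using W_inv_twirl by blast
next
  fix Rs lam0 lam1
  assume "PP_feasible_with \<alpha> n Rs lam0 lam1 \<and> W_invariant Rs"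
  then show "lam0 = lam1" using part2 by blast
qed


end
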